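(* Let $R\ge1$, $m\ge R+2$, let $A$ be a real $m\times R$ matrix with $\operatorname{rank}(A)=R$ and $\iota_m\notin\operatorname{col}(A)$, let $C$ be a real symmetric positive semidefinite $m\times m$ matrix, and suppose $\operatorname{null}\big((A,\iota_m)^\top\big)\not\subseteq\operatorname{null}(C)$. Let $v^\ast$ be any minimiser of $v^\top Cv$ over $\mathcal V=\{v\in\mathbb R^m: v^\top A=0_R^\top,\ v^\top\iota_m=1\}$. Then there exists at least one vector $u^\ast\in\mathbb R^m$ such that $$u^{\ast\top}A=0_R^\top,\qquad u^{\ast\top}\iota_m=0,\qquad u^{\ast\top}Cu^\ast=v^{\ast\top}Cv^\ast,$$ and any such $u^\ast$ satisfies $u^{\ast\top}Cv^\ast=0$.
   Context: $\iota_m$ is the $m$-vector of ones; $0_R$ the zero vector in $\mathbb R^R$; $\operatorname{col}$ and $\operatorname{null}$ denote column space and null space; $(A,\iota_m)$ is the $m\times(R+1)$ matrix obtained by appending $\iota_m$ as a last column to $A$. A vector $u^\ast$ as in the claim is called a variance weights vector. *)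

theory Defs
  imports "HOL-Analysis.Analysis"
begin

end

theory Submission
  imports Defs
begin

lemma quad_zero:
  fixes a b :: real
  assumes h: "\<forall>t. 0 \<le> 2*t*b + t^2*a"
  shows "b = 0"
proof -
  define s where "s = 1 / (\<bar>a\<bar> + 1)"
  have s0: "s > 0" unfolding s_def by simp
  have sa: "s * a < 1"
  proof -
    have "s * a \<le> s * \<bar>a\<bar>" using s0 by (simp add: mult_left_mono)
    also have "\<dots> < 1" unfolding s_def by (simp add: field_simps)
    finally show ?thesis .
  qed
  define t0 where "t0 = - (b * s)"
  have "0 \<le> 2*t0*b + t0^2*a" using h by blast
  also have "\<dots> = b^2 * s * (s*a - 2)" unfolding t0_def by (simp add: power2_eq_square algebra_simps)
  finally have "0 \<le> b^2 * s * (s*a - 2)" .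
  moreover have "s*a - 2 < 0" using sa by simp
  ultimately have "b^2 * s \<le> 0"
    by (metis mult_less_0_iff linorder_not_le order_less_le_trans)
  hence "b^2 \<le> 0" using s0 by (simp add: mult_le_0_iff)
  thus ?thesis by simp
qed

lemma sym_inner:
  fixes C :: "real^'m^'m"
  assumes "transpose C = C"
  shows "u \<bullet> (C *v v) = v \<bullet> (C *v u)"
proof -
  have "u \<bullet> (C *v v) = (u v* C) \<bullet> v" by (simp add: dot_lmul_matrix)
  also have "u v* C = C *v u" using vector_transpose_matrix[of u C] assms by simp
  finally show ?thesis by (simp add: inner_commute)
qed

lemma expand:
  fixes C :: "real^'m^'m"
  assumes "transpose C = C"
  shows "(v + t *\<^sub>R u) \<bullet> (C *v (v + t *\<^sub>R u)) = v \<bullet> (C *v v) + 2*t*(u \<bullet> (C *v v)) + t^2*(u \<bullet> (C *v u))"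
  using sym_inner[OF assms, of v u]
  by (simp add: matrix_vector_right_distrib matrix_vector_mult_scaleR inner_add_left inner_add_right
      power2_eq_square algebra_simps)

theorem theorem2:
  fixes A :: "real^'r^'m" and C :: "real^'m^'m" and vstar :: "real^'m"
  assumes m_ge: "CARD('m) \<ge> CARD('r) + 2"
    and rankA: "rank A = CARD('r)"
    and iota_not_col: "vec 1 \<notin> range (\<lambda>x. A *v x)"
    and C_sym: "transpose C = C"
    and C_psd: "\<forall>x. 0 \<le> x \<bullet> (C *v x)"
    and not_sub: "\<not> ({v. transpose A *v v = 0 \<and> v \<bullet> vec 1 = 0} \<subseteq> {v. C *v v = 0})"
    and vstar_feas: "vstar v* A = 0 \<and> vstar \<bullet> vec 1 = 1"
    and vstar_min: "\<forall>v. v v* A = 0 \<and> v \<bullet> vec 1 = 1 \<longrightarrow> vstar \<bullet> (C *v vstar) \<le> v \<bullet> (C *v v)"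
  shows "(\<exists>u. u v* A = 0 \<and> u \<bullet> vec 1 = 0 \<and> u \<bullet> (C *v u) = vstar \<bullet> (C *v vstar))
       \<and> (\<forall>u. u v* A = 0 \<and> u \<bullet> vec 1 = 0 \<and> u \<bullet> (C *v u) = vstar \<bullet> (C *v vstar)
              \<longrightarrow> u \<bullet> (C *v vstar) = 0)"
proof
  have tA: "transpose A *v v = v v* A" for v :: "real^'m"
    using vector_transpose_matrix[of v "transpose A"] by simp
  obtain w where w1: "w v* A = 0" and w2: "w \<bullet> vec 1 = 0" and wC: "C *v w \<noteq> 0"
    using not_sub tA by auto
  have wpos: "w \<bullet> (C *v w) > 0"
  proof (rule ccontr)
    assume "\<not> ?thesis"
    hence w0: "w \<bullet> (C *v w) = 0" using C_psd[rule_format, of w] by linarith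
    have "\<forall>t. 0 \<le> 2*t*((C *v w) \<bullet> (C *v w)) + t^2*((C *v w) \<bullet> (C *v (C *v w)))"
    proof
      fix t :: real
      have "0 \<le> (w + t *\<^sub>R (C *v w)) \<bullet> (C *v (w + t *\<^sub>R (C *v w)))" using C_psd by blast
      thus "0 \<le> 2*t*((C *v w) \<bullet> (C *v w)) + t^2*((C *v w) \<bullet> (C *v (C *v w)))"
        using expand[OF C_sym, of w t "C *v w"] w0 by simp
    qed
    hence "(C *v w) \<bullet> (C *v w) = 0" by (rule quad_zero)
    thus False using wC by simp
  qed
  define c where "c = sqrt (vstar \<bullet> (C *v vstar) / (w \<bullet> (C *v w)))"
  have "c^2 = vstar \<bullet> (C *v vstar) / (w \<bullet> (C *v w))"
    unfolding c_def using C_psd wpos by simp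
  hence cc: "c^2 * (w \<bullet> (C *v w)) = vstar \<bullet> (C *v vstar)" using wpos by simp
  show "\<exists>u. u v* A = 0 \<and> u \<bullet> vec 1 = 0 \<and> u \<bullet> (C *v u) = vstar \<bullet> (C *v vstar)"
  proof (intro exI conjI)
    show "(c *\<^sub>R w) v* A = 0" using w1
      by (metis scaleR_vector_matrix_assoc scaleR_zero_right)
    show "(c *\<^sub>R w) \<bullet> vec 1 = 0" using w2 by simp
    show "(c *\<^sub>R w) \<bullet> (C *v (c *\<^sub>R w)) = vstar \<bullet> (C *v vstar)"
      using cc by (simp add: matrix_vector_mult_scaleR power2_eq_square)
  qed
next
  show "\<forall>u. u v* A = 0 \<and> u \<bullet> vec 1 = 0 \<and> u \<bullet> (C *v u) = vstar \<bullet> (C *v vstar)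
              \<longrightarrow> u \<bullet> (C *v vstar) = 0"
  proof (intro allI impI)
    fix u assume hu: "u v* A = 0 \<and> u \<bullet> vec 1 = 0 \<and> u \<bullet> (C *v u) = vstar \<bullet> (C *v vstar)"
    have "\<forall>t. 0 \<le> 2*t*(u \<bullet> (C *v vstar)) + t^2*(u \<bullet> (C *v u))"
    proof
      fix t :: real
      have "(vstar + t *\<^sub>R u) v* A = 0" using hu vstar_feas
        by (simp add: vector_matrix_left_distrib scaleR_vector_matrix_assoc)
      moreover have "(vstar + t *\<^sub>R u) \<bullet> vec 1 = 1" using hu vstar_feas by (simp add: inner_add_left)
      ultimately have "vstar \<bullet> (C *v vstar) \<le> (vstar + t *\<^sub>R u) \<bullet> (C *v (vstar + t *\<^sub>R u))"
        using vstar_min by blast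
      thus "0 \<le> 2*t*(u \<bullet> (C *v vstar)) + t^2*(u \<bullet> (C *v u))"
        using expand[OF C_sym, of vstar t u] by simp
    qed
    thus "u \<bullet> (C *v vstar) = 0" by (rule quad_zero)
  qed
qed

end
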